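(* Fix $F$ and $c$. For $h_1\in(0,1)$ let $\underline h_2(h_1)\in(0,1)$ be defined by $F(h_1,1)=F(1,\underline h_2(h_1))$, and consider $\boldsymbol h=(h_1,h_2)$ with $h_1\in(0,1)$ and $h_2\in[\underline h_2(h_1),1)$ (equivalently, humans are stronger in dimension 2 than in dimension 1: $F(1,h_2)\ge F(h_1,1)$). For such $\boldsymbol h$ let $w^*_{\boldsymbol h}(\boldsymbol m)=\max\{\bar w_s,\bar w_b,\bar w_t\}$ denote labor income as a function of $\boldsymbol m\in[0,1]^2$. Then there exists $\bar h_1\in(0,1)$ such that: - If $h_1\ge\bar h_1$, then for every $h_2\in[\underline h_2(h_1),1)$, $\boldsymbol m=(1,0)$ maximizes $w^*_{\boldsymbol h}$ over $[0,1]^2$. - If $h_1<\bar h_1$, then there exists $\bar h_2(h_1)\in[\underline h_2(h_1),1)$ such that: if $h_2\in[\bar h_2(h_1),1)$ then $\boldsymbol m=(1,0)$ maximizes $w^*_{\boldsymbol h}$ over $[0,1]^2$; and if $h_2\in[\underline h_2(h_1),\bar h_2(h_1))$ then $\boldsymbol m=(1,1)$ maximizes $w^*_{\boldsymbol h}$ over $[0,1]^2$.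
   Context: $F$ is a cumulative distribution function on $[0,1]^2$ with a density $f$ that has full support on $[0,1]^2$, and $c\in(0,1)$. For $\boldsymbol x,\boldsymbol y\in[0,1]^2$ write $\boldsymbol x\vee\boldsymbol y=(\max\{x_1,y_1\},\max\{x_2,y_2\})$, and for $F(\boldsymbol x)<1$ let $n(\boldsymbol x)=\frac{1}{c(1-F(\boldsymbol x))}$. Given $\boldsymbol h\in(0,1)^2$ and $\boldsymbol m\in[0,1]^2$ define $\bar w_s=F(\boldsymbol h)$, $\bar w_b=n(\boldsymbol m)\big(F(\boldsymbol m\vee\boldsymbol h)-F(\boldsymbol m)\big)$ (with $\bar w_b:=0$ if $F(\boldsymbol m)=1$), $\bar w_t=F(\boldsymbol m\vee\boldsymbol h)-F(\boldsymbol m)/n(\boldsymbol h)$. In the model with abundant machines, $\max\{\bar w_s,\bar w_b,\bar w_t\}$ is the equilibrium wage (labor income) when humans have knowledge $\boldsymbol h$ and machines have knowledge $\boldsymbol m$. *)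

theory Defs
  imports "HOL-Analysis.Analysis"
begin

definition unit_sq :: "(real \<times> real) set" where
  "unit_sq = cbox (0,0) (1,1)"

definition is_density_with_full_support :: "(real \<times> real \<Rightarrow> real) \<Rightarrow> bool" where
  "is_density_with_full_support f \<longleftrightarrow>
     f integrable_on unit_sq \<and>
     (\<forall>x\<in>unit_sq. 0 \<le> f x) \<and>
     integral unit_sq f = 1 \<and>
     (\<forall>U. open U \<and> U \<inter> unit_sq \<noteq> {} \<longrightarrow> integral (U \<inter> unit_sq) f > 0)"

definition is_cdf_of :: "(real \<times> real \<Rightarrow> real) \<Rightarrow> (real \<times> real \<Rightarrow> real) \<Rightarrow> bool" where
  "is_cdf_of F f \<longleftrightarrow> (\<forall>x\<in>unit_sq. F x = integral (cbox (0,0) x) f)"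

definition vee :: "real \<times> real \<Rightarrow> real \<times> real \<Rightarrow> real \<times> real" where
  "vee x y = (max (fst x) (fst y), max (snd x) (snd y))"

definition nfun :: "(real \<times> real \<Rightarrow> real) \<Rightarrow> real \<Rightarrow> real \<times> real \<Rightarrow> real" where
  "nfun F c x = 1 / (c * (1 - F x))"

definition w_s :: "(real \<times> real \<Rightarrow> real) \<Rightarrow> real \<Rightarrow> real \<times> real \<Rightarrow> real \<times> real \<Rightarrow> real" where
  "w_s F c h m = F h"

definition w_b :: "(real \<times> real \<Rightarrow> real) \<Rightarrow> real \<Rightarrow> real \<times> real \<Rightarrow> real \<times> real \<Rightarrow> real" where
  "w_b F c h m = (if F m = 1 then 0 else nfun F c m * (F (vee m h) - F m))"

definition w_t :: "(real \<times> real \<Rightarrow> real) \<Rightarrow> real \<Rightarrow> real \<times> real \<Rightarrow> real \<times> real \<Rightarrow> real" where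
  "w_t F c h m = F (vee m h) - F m / nfun F c h"

definition wage :: "(real \<times> real \<Rightarrow> real) \<Rightarrow> real \<Rightarrow> real \<times> real \<Rightarrow> real \<times> real \<Rightarrow> real" where
  "wage F c h m = max (w_s F c h m) (max (w_b F c h m) (w_t F c h m))"

definition h2_low :: "(real \<times> real \<Rightarrow> real) \<Rightarrow> real \<Rightarrow> real" where
  "h2_low F h1 = (THE t. 0 < t \<and> t < 1 \<and> F (h1, 1) = F (1, t))"

definition maximizes_wage :: "(real \<times> real \<Rightarrow> real) \<Rightarrow> real \<Rightarrow> real \<times> real \<Rightarrow> real \<times> real \<Rightarrow> bool" where
  "maximizes_wage F c h m \<longleftrightarrow> m \<in> unit_sq \<and> (\<forall>m'\<in>unit_sq. wage F c h m' \<le> wage F c h m)"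

end

theory Submission
  imports Defs
begin

lemma mem_box2: "y \<in> cbox (a::real,b::real) (c,d) \<longleftrightarrow> a \<le> fst y \<and> fst y \<le> c \<and> b \<le> snd y \<and> snd y \<le> d"
  by (cases y) (simp add: cbox_Pair_eq)

lemma mem_box0: "y \<in> cbox (0::real,0::real) x \<longleftrightarrow> 0 \<le> fst y \<and> fst y \<le> fst x \<and> 0 \<le> snd y \<and> snd y \<le> snd x"
  by (cases x) (simp add: mem_box2)

lemma unit_sq_iff: "x \<in> unit_sq \<longleftrightarrow> 0 \<le> fst x \<and> fst x \<le> 1 \<and> 0 \<le> snd x \<and> snd x \<le> 1"
  unfolding unit_sq_def by (simp add: mem_box2)

lemma negl_fst: "negligible {x::real\<times>real. fst x = a}"
proof -
  have "negligible {x::real\<times>real. x \<bullet> (1,0) = a}"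
    by (rule negligible_standard_hyperplane) (simp add: Basis_prod_def)
  moreover have "{x::real\<times>real. x \<bullet> (1,0) = a} = {x. fst x = a}" "{x::real\<times>real. x \<bullet> (0,1) = a} = {x. snd x = a}" by (auto simp: inner_prod_def)
  ultimately show ?thesis by simp
qed

lemma negl_snd: "negligible {x::real\<times>real. snd x = a}"
proof -
  have "negligible {x::real\<times>real. x \<bullet> (0,1) = a}"
    by (rule negligible_standard_hyperplane) (simp add: Basis_prod_def)
  moreover have "{x::real\<times>real. x \<bullet> (1,0) = a} = {x. fst x = a}" "{x::real\<times>real. x \<bullet> (0,1) = a} = {x. snd x = a}" by (auto simp: inner_prod_def)
  ultimately show ?thesis by simp
qed

context
  fixes F f :: "real \<times> real \<Rightarrow> real"
  assumes D: "is_density_with_full_support f" and C: "is_cdf_of F f"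
begin

lemma f_int: "f integrable_on unit_sq" and f_nn: "\<And>x. x \<in> unit_sq \<Longrightarrow> 0 \<le> f x"
  and f_tot: "integral unit_sq f = 1"
  and f_supp: "\<And>U. open U \<Longrightarrow> U \<inter> unit_sq \<noteq> {} \<Longrightarrow> integral (U \<inter> unit_sq) f > 0"
  using D unfolding is_density_with_full_support_def by auto

definition "ind x = (\<lambda>y. if y \<in> cbox (0,0) x then f y else 0)"

lemma box_sub: "x \<in> unit_sq \<Longrightarrow> cbox (0,0) x \<subseteq> unit_sq"
  by (cases x) (auto simp: unit_sq_iff mem_box2)

lemma ind_int: "x \<in> unit_sq \<Longrightarrow> ind x integrable_on unit_sq"
  unfolding ind_def integrable_restrict_Int
  using box_sub[of x] integrable_on_subcbox[OF f_int, of 0 x]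
  by (simp add: Int_absorb2 zero_prod_def)

lemma F_ind: "x \<in> unit_sq \<Longrightarrow> F x = integral unit_sq (ind x)"
  unfolding ind_def integral_restrict_Int using C box_sub[of x]
  by (simp add: is_cdf_of_def Int_absorb2)

lemma F_mono: assumes "x \<in> unit_sq" "y \<in> unit_sq" "fst x \<le> fst y" "snd x \<le> snd y" shows "F x \<le> F y"
  unfolding F_ind[OF assms(1)] F_ind[OF assms(2)]
proof (rule integral_le[OF ind_int ind_int])
  fix z assume "z \<in> unit_sq" then show "ind x z \<le> ind y z" using assms
    by (cases x, cases y, cases z) (auto simp: ind_def mem_box2 f_nn)
qed (use assms in auto)

lemma F_11: "F (1,1) = 1"
  using C f_tot by (simp add: is_cdf_of_def unit_sq_def unit_sq_iff)

lemma F_a0: "0 \<le> a \<Longrightarrow> a \<le> 1 \<Longrightarrow> F (a,0) = 0"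
  using C by (simp add: is_cdf_of_def unit_sq_iff content_eq_0 Basis_prod_def)

lemma F_0b: "0 \<le> b \<Longrightarrow> b \<le> 1 \<Longrightarrow> F (0,b) = 0"
  using C by (simp add: is_cdf_of_def unit_sq_iff content_eq_0 Basis_prod_def)

lemma F_cont: "continuous_on unit_sq F"
proof (rule continuous_on_sequentiallyI)
  fix u a assume u: "\<forall>n. u n \<in> unit_sq" and a: "a \<in> unit_sq" and lim: "u \<longlonglongrightarrow> a"
  define N where "N = {y::real\<times>real. fst y = fst a} \<union> {y. snd y = snd a}"
  have nN: "negligible N" unfolding N_def using negl_fst negl_snd by (rule negligible_Un)
  define g where "g k y = (if y \<in> N then 0 else ind (u k) y)" for k y
  define G where "G y = (if y \<in> N then 0 else ind a y)" for y
  have gi: "g k integrable_on unit_sq" for k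
    by (rule integrable_spike[OF ind_int[of "u k"] nN]) (use u in \<open>auto simp: g_def\<close>)
  have ge: "integral unit_sq (g k) = F (u k)" for k
    unfolding F_ind[OF spec[OF u]] by (rule integral_spike[OF nN]) (auto simp: g_def)
  have Ge: "integral unit_sq G = F a"
    unfolding F_ind[OF a] by (rule integral_spike[OF nN]) (auto simp: G_def)
  have l1: "(\<lambda>k. fst (u k)) \<longlonglongrightarrow> fst a" and l2: "(\<lambda>k. snd (u k)) \<longlonglongrightarrow> snd a"
    using lim by (auto intro: tendsto_fst tendsto_snd)
  have conv: "(\<lambda>k. g k y) \<longlonglongrightarrow> G y" if y: "y \<in> unit_sq" for y
  proof (cases "y \<in> N")
    case True then show ?thesis by (simp add: g_def G_def)
  next
    case False
    then have n1: "fst y \<noteq> fst a" and n2: "snd y \<noteq> snd a" by (auto simp: N_def)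
    show ?thesis
    proof (cases "fst y < fst a \<and> snd y < snd a")
      case True
      have "eventually (\<lambda>k. fst y < fst (u k)) sequentially"
        using order_tendstoD(1)[OF l1] True by blast
      moreover have "eventually (\<lambda>k. snd y < snd (u k)) sequentially"
        using order_tendstoD(1)[OF l2] True by blast
      ultimately have "eventually (\<lambda>k. g k y = G y) sequentially"
        by eventually_elim (use True y False in \<open>cases y; auto simp: g_def G_def ind_def mem_box0 unit_sq_iff\<close>)
      then show ?thesis by (rule tendsto_eventually)
    next
      case nt: False
      then have "fst a < fst y \<or> snd a < snd y" using n1 n2 by auto
      then have "eventually (\<lambda>k. fst (u k) < fst y \<or> snd (u k) < snd y) sequentially"
      proof
        assume "fst a < fst y" then show ?thesis
          using order_tendstoD(2)[OF l1, of "fst y"] by (auto elim: eventually_mono)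
      next
        assume "snd a < snd y" then show ?thesis
          using order_tendstoD(2)[OF l2, of "snd y"] by (auto elim: eventually_mono)
      qed
      then have "eventually (\<lambda>k. g k y = G y) sequentially"
        by eventually_elim (use nt y n1 n2 in \<open>auto simp: g_def G_def ind_def mem_box0 unit_sq_iff N_def\<close>)
      then show ?thesis by (rule tendsto_eventually)
    qed
  qed
  have "(\<lambda>k. integral unit_sq (g k)) \<longlonglongrightarrow> integral unit_sq G"
    by (rule dominated_convergence(2)[OF gi f_int _ conv])
       (auto simp: g_def ind_def f_nn)
  then show "(\<lambda>n. F (u n)) \<longlonglongrightarrow> F a" using ge Ge by simp
qed

lemma F_strict:
  assumes x: "x \<in> unit_sq" and y: "y \<in> unit_sq" and U: "open U" "U \<inter> unit_sq \<noteq> {}"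
    and le: "fst x \<le> fst y" "snd x \<le> snd y"
    and d: "U \<inter> cbox (0,0) x = {}" and s: "U \<inter> unit_sq \<subseteq> cbox (0,0) y"
  shows "F x < F y"
proof -
  have P: "integral (U \<inter> unit_sq) f > 0" using f_supp U by blast
  then have "f integrable_on (U \<inter> unit_sq)" using not_integrable_integral by force
  then have gi: "(\<lambda>z. if z \<in> U then f z else 0) integrable_on unit_sq"
    by (simp add: integrable_restrict_Int)
  have gv: "integral unit_sq (\<lambda>z. if z \<in> U then f z else 0) > 0"
    using P by (simp add: integral_restrict_Int)
  have "integral unit_sq (\<lambda>z. ind x z + (if z \<in> U then f z else 0)) \<le> integral unit_sq (ind y)"
  proof (rule integral_le[OF integrable_add[OF ind_int[OF x] gi] ind_int[OF y]])
    fix z assume z: "z \<in> unit_sq"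
    show "ind x z + (if z \<in> U then f z else 0) \<le> ind y z"
      using d s z f_nn[OF z] x y le
      by (auto simp: ind_def mem_box0 unit_sq_iff)
  qed
  moreover have "integral unit_sq (\<lambda>z. ind x z + (if z \<in> U then f z else 0)) =
    integral unit_sq (ind x) + integral unit_sq (\<lambda>z. if z \<in> U then f z else 0)"
    by (rule integral_add[OF ind_int[OF x] gi])
  ultimately show ?thesis using gv F_ind[OF x] F_ind[OF y] by linarith
qed

lemma F_strict2: assumes "0 \<le> t" "t < t'" "t' \<le> 1" shows "F (1,t) < F (1,t')"
proof (rule F_strict[of _ _ "{z. t < snd z \<and> snd z < t'}"])
  show "open {z::real\<times>real. t < snd z \<and> snd z < t'}"
    by (intro open_Collect_conj open_Collect_less continuous_intros)
  have "(0, (t+t')/2) \<in> {z::real\<times>real. t < snd z \<and> snd z < t'} \<inter> unit_sq"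
    using assms by (auto simp: unit_sq_iff)
  then show "{z::real\<times>real. t < snd z \<and> snd z < t'} \<inter> unit_sq \<noteq> {}" by blast
qed (use assms in \<open>auto simp: unit_sq_iff mem_box0\<close>)

lemma F_strict1: assumes "0 \<le> t" "t < t'" "t' \<le> 1" shows "F (t,1) < F (t',1)"
proof (rule F_strict[of _ _ "{z. t < fst z \<and> fst z < t'}"])
  show "open {z::real\<times>real. t < fst z \<and> fst z < t'}"
    by (intro open_Collect_conj open_Collect_less continuous_intros)
  have "((t+t')/2, 0) \<in> {z::real\<times>real. t < fst z \<and> fst z < t'} \<inter> unit_sq"
    using assms by (auto simp: unit_sq_iff)
  then show "{z::real\<times>real. t < fst z \<and> fst z < t'} \<inter> unit_sq \<noteq> {}" by blast
qed (use assms in \<open>auto simp: unit_sq_iff mem_box0\<close>)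

lemma F_rect: assumes "0 \<le> a" "a \<le> 1" "0 \<le> b" "b \<le> b'" "b' \<le> 1"
  shows "F (a,b') - F (a,b) \<le> F (1,b') - F (1,b)"
proof -
  have m: "(a,b) \<in> unit_sq" "(a,b') \<in> unit_sq" "(1,b) \<in> unit_sq" "(1,b') \<in> unit_sq"
    using assms by (auto simp: unit_sq_iff)
  have "integral unit_sq (\<lambda>z. ind (a,b') z + ind (1,b) z) \<le> integral unit_sq (\<lambda>z. ind (1,b') z + ind (a,b) z)"
  proof (rule integral_le[OF integrable_add[OF ind_int ind_int] integrable_add[OF ind_int ind_int]])
    fix z assume z: "z \<in> unit_sq"
    show "ind (a,b') z + ind (1,b) z \<le> ind (1,b') z + ind (a,b) z"
      using z f_nn[OF z] assms by (auto simp: ind_def mem_box0 unit_sq_iff)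
  qed (use m in auto)
  then show ?thesis
    using integral_add[OF ind_int[OF m(2)] ind_int[OF m(3)]] integral_add[OF ind_int[OF m(4)] ind_int[OF m(1)]]
      F_ind[OF m(1)] F_ind[OF m(2)] F_ind[OF m(3)] F_ind[OF m(4)] by linarith
qed

lemma F_nn: "x \<in> unit_sq \<Longrightarrow> 0 \<le> F x"
  using F_mono[of "(0,0)" x] F_a0[of 0] by (auto simp: unit_sq_iff)

lemma F_le1: "x \<in> unit_sq \<Longrightarrow> F x \<le> 1"
  using F_mono[of x "(1,1)"] F_11 by (auto simp: unit_sq_iff)

lemma cont_snd: "0 \<le> a \<Longrightarrow> a \<le> 1 \<Longrightarrow> continuous_on {0..1} (\<lambda>t. F (a,t))"
  by (rule continuous_on_compose2[OF F_cont, of _ "\<lambda>t. (a,t)"]) (auto intro!: continuous_intros simp: unit_sq_iff)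

lemma cont_fst: "continuous_on {0..1} (\<lambda>t. F (t,1))"
  by (rule continuous_on_compose2[OF F_cont, of _ "\<lambda>t. (t,1)"]) (auto intro!: continuous_intros simp: unit_sq_iff)

lemma h2_low_prop: assumes "0 < h1" "h1 < 1"
  shows "0 < h2_low F h1 \<and> h2_low F h1 < 1 \<and> F (h1, 1) = F (1, h2_low F h1)"
proof -
  let ?a = "F (h1,1)"
  have lo: "0 < ?a" using F_strict1[of 0 h1] F_0b[of 1] assms by auto
  have hi: "?a < 1" using F_strict1[of h1 1] F_11 assms by auto
  obtain t where t: "0 \<le> t" "t \<le> 1" "F (1,t) = ?a"
    using IVT'[of "\<lambda>t. F (1,t)" 0 ?a 1] cont_snd[of 1] lo hi F_a0[of 1] F_11 by auto
  have t2: "0 < t" "t < 1" using t lo hi F_a0[of 1] F_11 by (auto simp: order.order_iff_strict)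
  have P: "0 < t \<and> t < 1 \<and> F (h1, 1) = F (1, t)" using t t2 by auto
  have U: "t' = t" if "0 < t' \<and> t' < 1 \<and> F (h1, 1) = F (1, t')" for t'
  proof (rule ccontr)
    assume "t' \<noteq> t"
    then consider "t' < t" | "t < t'" by linarith
    then show False using F_strict2[of t' t] F_strict2[of t t'] that P by (cases; auto)
  qed
  have "h2_low F h1 = t" unfolding h2_low_def by (rule the_equality[of "\<lambda>t. 0 < t \<and> t < 1 \<and> F (h1, 1) = F (1, t)", OF P U])
  then show ?thesis using P by simp
qed

lemma wage_10: assumes c: "0 < c" "c < 1" and h: "0 < h1" "h1 < 1" "0 \<le> h2" "h2 \<le> 1"
  and dom: "F (h1,1) \<le> F (1,h2)"
  shows "wage F c (h1,h2) (1,0) = F (1,h2) / c"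
proof -
  have "F (h1,h2) \<le> F (1,h2)" using F_mono[of "(h1,h2)" "(1,h2)"] h by (auto simp: unit_sq_iff)
  moreover have "F (1,h2) \<le> F (1,h2)/c" using c F_nn[of "(1,h2)"] h
    by (auto simp: unit_sq_iff divide_simps intro: mult_left_le)
  ultimately show ?thesis using F_a0[of 1] c h
    by (simp add: wage_def w_s_def w_b_def w_t_def vee_def nfun_def)
qed

lemma wage_11: assumes c: "0 < c" "c < 1" and h: "0 < h1" "h1 < 1" "0 \<le> h2" "h2 \<le> 1"
  shows "wage F c (h1,h2) (1,1) = 1 - c * (1 - F (h1,h2))"
proof -
  have hs: "(h1,h2) \<in> unit_sq" using h by (auto simp: unit_sq_iff)
  have "F (h1,h2) \<le> 1" using F_le1[OF hs] .
  moreover have "0 \<le> F (h1,h2)" using F_nn[OF hs] .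
  ultimately have p1: "0 \<le> (1-c)*(1 - F (h1,h2))" and p2: "c * (1 - F (h1,h2)) \<le> 1"
    using c by (auto intro: mult_le_one)
  then have a: "F (h1,h2) \<le> 1 - c * (1 - F (h1,h2))" "0 \<le> 1 - c * (1 - F (h1,h2))"
    by (auto simp: algebra_simps)
  show ?thesis using a F_11 h
    by (auto simp add: wage_def w_s_def w_b_def w_t_def vee_def nfun_def max_def)
qed

lemma wage_bound: assumes c: "0 < c" "c < 1" and h: "0 < h1" "h1 < 1" "0 \<le> h2" "h2 \<le> 1"
  and dom: "F (h1,1) \<le> F (1,h2)" and m: "m \<in> unit_sq"
  shows "wage F c (h1,h2) m \<le> max (F (1,h2) / c) (1 - c * (1 - F (h1,h2)))"
proof -
  define V where "V = F (vee m (h1,h2))"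
  define Fm where "Fm = F m"
  define Fh where "Fh = F (h1,h2)"
  define W10 where "W10 = F (1,h2) / c"
  define W11 where "W11 = 1 - c * (1 - Fh)"
  have hs: "(h1,h2) \<in> unit_sq" using h by (auto simp: unit_sq_iff)
  have vs: "vee m (h1,h2) \<in> unit_sq" using m h by (auto simp: unit_sq_iff vee_def)
  have FmV: "Fm \<le> V" unfolding Fm_def V_def using F_mono[OF m vs] by (auto simp: vee_def)
  have V1: "V \<le> 1" unfolding V_def using F_le1[OF vs] .
  have Fm0: "0 \<le> Fm" unfolding Fm_def using F_nn[OF m] .
  have Fh0: "0 \<le> Fh" "Fh \<le> 1" unfolding Fh_def using F_nn[OF hs] F_le1[OF hs] by auto
  have Fh1: "Fh \<le> F (1,h2)" unfolding Fh_def using F_mono[OF hs, of "(1,h2)"] h by (auto simp: unit_sq_iff)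
  have F1h0: "0 \<le> F (1,h2)" using F_nn[of "(1,h2)"] h by (auto simp: unit_sq_iff)
  have W10ge: "F (1,h2) \<le> W10" unfolding W10_def using c F1h0
    by (auto simp: divide_simps intro: mult_left_le)
  have p2: "c * (1 - Fh) \<le> 1" using c Fh0 by (auto intro: mult_le_one)
  have p3: "0 \<le> c * (1 - Fh)" using c Fh0 by auto
  then have W11ge: "0 \<le> W11" using p2 unfolding W11_def by auto
  have inv: "Fm / nfun F c (h1,h2) = Fm * (c * (1 - Fh))" by (simp add: nfun_def Fh_def)
  have ws: "w_s F c (h1,h2) m \<le> W10" using Fh1 W10ge by (simp add: w_s_def Fh_def)
  show ?thesis
  proof (cases "h1 \<le> fst m \<and> h2 \<le> snd m")
    case True
    then have "vee m (h1,h2) = m" by (cases m) (auto simp: vee_def)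
    then have VF: "V = Fm" by (simp add: V_def Fm_def)
    have wb: "w_b F c (h1,h2) m = 0" using VF by (simp add: w_b_def V_def Fm_def)
    have "w_t F c (h1,h2) m = Fm * W11" unfolding w_t_def
      using inv VF by (simp add: V_def Fm_def W11_def algebra_simps)
    also have "\<dots> \<le> W11" using W11ge Fm0 VF V1 by (intro mult_left_le_one_le) auto
    finally show ?thesis using ws wb W11ge
      unfolding wage_def W10_def W11_def Fh_def by (smt (verit) max_def)
  next
    case False
    have VB: "V \<le> F (1,h2)"
    proof (cases "fst m < h1")
      case True
      then have "V \<le> F (h1,1)" unfolding V_def using m h
        by (intro F_mono) (auto simp: vee_def unit_sq_iff)
      then show ?thesis using dom by simp
    next
      case f2: False
      then have "snd m < h2" using False by auto
      then show ?thesis unfolding V_def using m h f2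
        by (intro F_mono) (auto simp: vee_def unit_sq_iff)
    qed
    have "Fm * (c * (1 - Fh)) \<ge> 0" using Fm0 p3 by simp
    then have wt: "w_t F c (h1,h2) m \<le> W10" unfolding w_t_def
      using inv VB W10ge unfolding V_def Fm_def by linarith
    have wb: "w_b F c (h1,h2) m \<le> W10"
    proof (cases "Fm = 1")
      case True then show ?thesis using W10ge F1h0 by (simp add: w_b_def Fm_def)
    next
      case nF: False
      have m1: "Fm < 1" using nF FmV V1 by auto
      have "Fm * V \<le> Fm" using Fm0 V1 by (intro mult_left_le) auto
      have "V * (1 - Fm) \<le> F (1,h2) * (1 - Fm)" using VB m1 by (intro mult_right_mono) auto
      then have "V - Fm \<le> F (1,h2) * (1 - Fm)" using \<open>Fm * V \<le> Fm\<close>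
        by (simp add: algebra_simps)
      then have q: "(V - Fm) / (1 - Fm) \<le> F (1,h2)" using m1 by (simp add: pos_divide_le_eq)
      have "w_b F c (h1,h2) m = ((V - Fm) / (1 - Fm)) / c"
        using nF unfolding w_b_def nfun_def V_def[symmetric] Fm_def[symmetric] by simp
      also have "\<dots> \<le> W10" unfolding W10_def using q c by (intro divide_right_mono) auto
      finally show ?thesis .
    qed
    show ?thesis using ws wt wb unfolding wage_def W10_def by (smt (verit) max_def)
  qed
qed

lemma maxim: assumes c: "0 < c" "c < 1" and h: "0 < h1" "h1 < 1" "h2_low F h1 \<le> h2" "h2 < 1"
  shows "1 - c * (1 - F (h1,h2)) \<le> F (1,h2) / c \<Longrightarrow> maximizes_wage F c (h1,h2) (1,0)"
    and "F (1,h2) / c \<le> 1 - c * (1 - F (h1,h2)) \<Longrightarrow> maximizes_wage F c (h1,h2) (1,1)"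
proof -
  have L: "0 < h2_low F h1" "h2_low F h1 < 1" "F (h1, 1) = F (1, h2_low F h1)"
    using h2_low_prop[OF h(1,2)] by auto
  have h2: "0 \<le> h2" "h2 \<le> 1" using L h by auto
  have dom: "F (h1,1) \<le> F (1,h2)" using L(3) F_mono[of "(1, h2_low F h1)" "(1,h2)"] L h h2
    by (auto simp: unit_sq_iff)
  have b: "\<forall>m\<in>unit_sq. wage F c (h1,h2) m \<le> max (F (1,h2) / c) (1 - c * (1 - F (h1,h2)))"
    using wage_bound[OF c h(1,2) h2 dom] by blast
  have w10: "wage F c (h1,h2) (1,0) = F (1,h2) / c" by (rule wage_10[OF c h(1,2) h2 dom])
  have w11: "wage F c (h1,h2) (1,1) = 1 - c * (1 - F (h1,h2))" by (rule wage_11[OF c h(1,2) h2])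
  show "1 - c * (1 - F (h1,h2)) \<le> F (1,h2) / c \<Longrightarrow> maximizes_wage F c (h1,h2) (1,0)"
    using b w10 by (auto simp: maximizes_wage_def unit_sq_iff max_def)
  show "F (1,h2) / c \<le> 1 - c * (1 - F (h1,h2)) \<Longrightarrow> maximizes_wage F c (h1,h2) (1,1)"
    using b w11 by (auto simp: maximizes_wage_def unit_sq_iff max_def)
qed

lemma g_mono: assumes c: "0 < c" "c < 1" and h: "0 \<le> h1" "h1 \<le> 1" and ab: "0 \<le> a" "a \<le> b" "b \<le> 1"
  shows "F (1,a) / c - (1 - c * (1 - F (h1,a))) \<le> F (1,b) / c - (1 - c * (1 - F (h1,b)))"
proof -
  define D where "D = F (1,b) - F (1,a)"
  have D0: "0 \<le> D" unfolding D_def using F_mono[of "(1,a)" "(1,b)"] ab by (auto simp: unit_sq_iff)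
  have Dh: "F (h1,b) - F (h1,a) \<le> D" unfolding D_def using F_rect[OF h ab] .
  have "c * (F (h1,b) - F (h1,a)) \<le> c * D" using Dh c by (intro mult_left_mono) auto
  also have "\<dots> \<le> D" using D0 c by (intro mult_left_le_one_le) auto
  also have "\<dots> \<le> D / c" using D0 c by (auto simp: divide_simps intro: mult_left_le)
  finally have "c * (F (h1,b) - F (h1,a)) \<le> D / c" .
  then show ?thesis unfolding D_def by (simp add: diff_divide_distrib algebra_simps)
qed

end

theorem proposition4:
  fixes F f :: "real \<times> real \<Rightarrow> real" and c :: real
  assumes "is_density_with_full_support f"
    and "is_cdf_of F f"
    and "0 < c" and "c < 1"
  shows "\<exists>h1bar. 0 < h1bar \<and> h1bar < 1 \<and>
    (\<forall>h1 h2. h1bar \<le> h1 \<and> h1 < 1 \<and> h2_low F h1 \<le> h2 \<and> h2 < 1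
       \<longrightarrow> maximizes_wage F c (h1, h2) (1, 0)) \<and>
    (\<forall>h1. 0 < h1 \<and> h1 < h1bar \<longrightarrow>
       (\<exists>h2bar. h2_low F h1 \<le> h2bar \<and> h2bar < 1 \<and>
          (\<forall>h2. h2bar \<le> h2 \<and> h2 < 1 \<longrightarrow> maximizes_wage F c (h1, h2) (1, 0)) \<and>
          (\<forall>h2. h2_low F h1 \<le> h2 \<and> h2 < h2bar \<longrightarrow> maximizes_wage F c (h1, h2) (1, 1))))"
proof -
  note A = assms(1,2)
  have c: "0 < c" "c < 1" using assms by auto
  define k where "k = c / (1 + c)"
  have k: "0 < k" "k < 1" using c by (auto simp: k_def)
  have ne: "c + c * c \<noteq> 0" using c by (smt (verit) mult_pos_pos)
  have kc: "k / c - c * k = 1 - c" using c ne unfolding k_def by (simp add: field_simps power2_eq_square)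
  obtain h1bar where hb: "0 \<le> h1bar" "h1bar \<le> 1" "F (h1bar,1) = k"
    using IVT'[of "\<lambda>t. F (t,1)" 0 k 1] cont_fst[OF A] F_0b[OF A, of 1] F_11[OF A] k by auto
  have hb2: "0 < h1bar" "h1bar < 1" using hb k F_0b[OF A, of 1] F_11[OF A]
    by (auto simp: order.order_iff_strict)
  define g where "g h1 t = F (1,t) / c - (1 - c * (1 - F (h1,t)))" for h1 t
  have part1: "maximizes_wage F c (h1, h2) (1, 0)"
    if h: "h1bar \<le> h1" "h1 < 1" "h2_low F h1 \<le> h2" "h2 < 1" for h1 h2
  proof -
    have h10: "0 < h1" using h hb2 by auto
    have L: "0 < h2_low F h1" "h2_low F h1 < 1" "F (h1, 1) = F (1, h2_low F h1)"
      using h2_low_prop[OF A h10 h(2)] by auto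
    have "k \<le> F (h1,1)" using hb(3) F_mono[OF A, of "(h1bar,1)" "(h1,1)"] h hb2 by (auto simp: unit_sq_iff)
    also have "\<dots> \<le> F (1,h2)" using L(3) F_mono[OF A, of "(1, h2_low F h1)" "(1,h2)"] L h
      by (auto simp: unit_sq_iff)
    finally have kF: "k \<le> F (1,h2)" .
    have Fh: "F (h1,h2) \<le> F (1,h2)" using F_mono[OF A, of "(h1,h2)" "(1,h2)"] L h h10
      by (auto simp: unit_sq_iff)
    have "c * F (h1,h2) \<le> c * F (1,h2)" using Fh c by auto
    moreover have "k / c - c * k \<le> F (1,h2) / c - c * F (1,h2)"
    proof -
      have cc: "c * c \<le> 1" using c by (intro mult_le_one) auto
      have "k * (1/c - c) \<le> F (1,h2) * (1/c - c)" using kF c cc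
        by (intro mult_right_mono) (auto simp: field_simps)
      then show ?thesis by (simp add: algebra_simps)
    qed
    ultimately have "1 - c * (1 - F (h1,h2)) \<le> F (1,h2) / c" using kc by (simp add: algebra_simps)
    then show ?thesis by (rule maxim(1)[OF A c h10 h(2,3,4)])
  qed
  have part2: "\<exists>h2bar. h2_low F h1 \<le> h2bar \<and> h2bar < 1 \<and>
          (\<forall>h2. h2bar \<le> h2 \<and> h2 < 1 \<longrightarrow> maximizes_wage F c (h1, h2) (1, 0)) \<and>
          (\<forall>h2. h2_low F h1 \<le> h2 \<and> h2 < h2bar \<longrightarrow> maximizes_wage F c (h1, h2) (1, 1))"
    if h: "0 < h1" "h1 < h1bar" for h1
  proof -
    have h1: "h1 < 1" using h hb2 by auto
    define L where "L = h2_low F h1"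
    have L: "0 < L" "L < 1" using h2_low_prop[OF A h(1) h1] by (auto simp: L_def)
    have gm: "g h1 a \<le> g h1 b" if "L \<le> a" "a \<le> b" "b \<le> 1" for a b
      unfolding g_def using g_mono[OF A c, of h1 a b] that L h h1 by auto
    have g1: "0 < g h1 1"
    proof -
      have "0 \<le> c * (1 - F (h1,1))" using F_le1[OF A, of "(h1,1)"] h h1 c by (auto simp: unit_sq_iff)
      moreover have "1 < 1 / c" using c by (auto simp: field_simps)
      ultimately show ?thesis unfolding g_def using F_11[OF A] by simp
    qed
    have gc: "continuous_on {L..1} (g h1)"
    proof -
      have "continuous_on {L..1} (\<lambda>t. F (1,t))" using L
        by (intro continuous_on_subset[OF cont_snd[OF A, of 1]]) auto
      moreover have "continuous_on {L..1} (\<lambda>t. F (h1,t))" using cont_snd[OF A, of h1] L h h1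
        by (intro continuous_on_subset[OF cont_snd[OF A, of h1]]) auto
      ultimately show ?thesis unfolding g_def using c by (intro continuous_intros) auto
    qed
    have ok10: "maximizes_wage F c (h1, h2) (1, 0)" if "L \<le> h2" "h2 < 1" "0 \<le> g h1 h2" for h2
      using maxim(1)[OF A c h(1) h1, of h2] that by (auto simp: g_def L_def)
    have ok11: "maximizes_wage F c (h1, h2) (1, 1)" if "L \<le> h2" "h2 < 1" "g h1 h2 \<le> 0" for h2
      using maxim(2)[OF A c h(1) h1, of h2] that by (auto simp: g_def L_def)
    show ?thesis
    proof (cases "0 \<le> g h1 L")
      case True
      show ?thesis unfolding L_def[symmetric]
      proof (intro exI[of _ L] conjI allI impI)
        fix h2 assume "L \<le> h2 \<and> h2 < 1"
        then show "maximizes_wage F c (h1, h2) (1, 0)" using gm[of L h2] True by (intro ok10) auto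
      qed (use L in auto)
    next
      case False
      obtain x where x: "L \<le> x" "x \<le> 1" "g h1 x = 0"
        using IVT'[of "g h1" L 0 1] False g1 gc L by auto
      have x1: "x < 1" using x g1 by (auto simp: order.order_iff_strict)
      show ?thesis unfolding L_def[symmetric]
      proof (intro exI[of _ x] conjI allI impI)
        fix h2 assume "x \<le> h2 \<and> h2 < 1"
        then show "maximizes_wage F c (h1, h2) (1, 0)" using gm[of x h2] x by (intro ok10) auto
      next
        fix h2 assume "L \<le> h2 \<and> h2 < x"
        then show "maximizes_wage F c (h1, h2) (1, 1)" using gm[of h2 x] x x1 by (intro ok11) auto
      qed (use x x1 in auto)
    qed
  qed
  show ?thesis using hb2 part1 part2 by blast
qed

end
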